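(* For any natural number $n \geq 1$, $\{\omega^n, (\omega^n)^\star\} \leq_c \{\omega^{2n}, (\omega^{2n})^\star\}$.
   Context: Structures have domains contained in $\omega$. For countable structures $\mathcal{A},\mathcal{B}$, the class $\{\mathcal{A},\mathcal{B}\}$ denotes the class of all structures (with domain $\subseteq\omega$) isomorphic to $\mathcal{A}$ or to $\mathcal{B}$. Linear orders are in the language $\{<\}$; $L^\star$ is the reverse of a linear order $L$; $\omega^n$ denotes ordinal exponentiation (as an order type). An enumeration operator $\Gamma$ is a c.e. set of pairs $(\alpha,\varphi)$ with $\alpha$ a finite set of basic (atomic or negated atomic) sentences of the input language with constants from $\omega$ and $\varphi$ a basic sentence of the output language with constants from $\omega$; $\Gamma(X)=\{\varphi : (\alpha,\varphi)\in\Gamma,\ \alpha\subseteq X\}$. $\Gamma$ is a computable embedding of $\mathcal{K}_0$ into $\mathcal{K}_1$ ($\mathcal{K}_0\leq_c\mathcal{K}_1$) if for every $\mathcal{A}\in\mathcal{K}_0$, $\Gamma$ applied to the atomic diagram of $\mathcal{A}$ is the atomic diagram of a structure $\Gamma(\mathcal{A})\in\mathcal{K}_1$, and for all $\mathcal{A},\mathcal{B}\in\mathcal{K}_0$, $\mathcal{A}\cong\mathcal{B}$ iff $\Gamma(\mathcal{A})\cong\Gamma(\mathcal{B})$. *)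

theory Defs
  imports Main "HOL-Library.Nat_Bijection"
begin

datatype recf = Z | S | Id nat | Cn recf "recf list" | Pr recf recf | Mn recf

inductive eval :: "recf \<Rightarrow> nat list \<Rightarrow> nat \<Rightarrow> bool" where
  eval_Z: "eval Z xs 0"
| eval_S: "eval S (x # xs) (Suc x)"
| eval_Id: "i < length xs \<Longrightarrow> eval (Id i) xs (xs ! i)"
| eval_Cn: "length ys = length gs \<Longrightarrow> (\<forall>i < length gs. eval (gs ! i) xs (ys ! i))
            \<Longrightarrow> eval f ys z \<Longrightarrow> eval (Cn f gs) xs z"
| eval_Pr0: "eval f xs y \<Longrightarrow> eval (Pr f g) (0 # xs) y"
| eval_PrS: "eval (Pr f g) (n # xs) r \<Longrightarrow> eval g (r # n # xs) y
            \<Longrightarrow> eval (Pr f g) (Suc n # xs) y"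
| eval_Mn: "eval f (y # xs) 0 \<Longrightarrow> (\<forall>z < y. \<exists>v. v \<noteq> 0 \<and> eval f (z # xs) v)
            \<Longrightarrow> eval (Mn f) xs y"

definition ce :: "nat set \<Rightarrow> bool" where
  "ce A \<longleftrightarrow> (\<exists>f. A = {x. \<exists>y. eval f [x] y})"

datatype basic = Less nat nat | Eq nat nat | NLess nat nat | NEq nat nat

fun code_basic :: "basic \<Rightarrow> nat" where
  "code_basic (Less a b) = 4 * prod_encode (a, b)"
| "code_basic (Eq a b) = 4 * prod_encode (a, b) + 1"
| "code_basic (NLess a b) = 4 * prod_encode (a, b) + 2"
| "code_basic (NEq a b) = 4 * prod_encode (a, b) + 3"

text \<open>Structures: domain D \<subseteq> omega together with a binary relation (interpreting <).\<close>
type_synonym 'a struct = "'a set \<times> ('a \<Rightarrow> 'a \<Rightarrow> bool)"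

definition diag :: "nat struct \<Rightarrow> basic set" where
  "diag A = (case A of (D, R) \<Rightarrow>
      {Less a b | a b. a \<in> D \<and> b \<in> D \<and> R a b}
    \<union> {Eq a a | a. a \<in> D}
    \<union> {NLess a b | a b. a \<in> D \<and> b \<in> D \<and> \<not> R a b}
    \<union> {NEq a b | a b. a \<in> D \<and> b \<in> D \<and> a \<noteq> b})"

definition iso :: "'a struct \<Rightarrow> 'b struct \<Rightarrow> bool" where
  "iso A B = (case A of (D, R) \<Rightarrow> case B of (E, Q) \<Rightarrow>
      (\<exists>f. bij_betw f D E \<and> (\<forall>a\<in>D. \<forall>b\<in>D. R a b \<longleftrightarrow> Q (f a) (f b))))"

definition rev_order :: "'a struct \<Rightarrow> 'a struct" where
  "rev_order A = (case A of (D, R) \<Rightarrow> (D, \<lambda>a b. R b a))"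

text \<open>omega^n: length-n lists of naturals ordered lexicographically, the first
  coordinate being most significant (omega^(n+1) = omega^n * omega).\<close>
fun lex_less :: "nat list \<Rightarrow> nat list \<Rightarrow> bool" where
  "lex_less (x # xs) (y # ys) = (x < y \<or> (x = y \<and> lex_less xs ys))"
| "lex_less _ _ = False"

definition omega_pow :: "nat \<Rightarrow> nat list struct" where
  "omega_pow n = ({xs. length xs = n}, lex_less)"

definition pair_class :: "'a struct \<Rightarrow> 'b struct \<Rightarrow> nat struct set" where
  "pair_class A B = {C. iso C A \<or> iso C B}"

definition enum_operator :: "(basic set \<times> basic) set \<Rightarrow> bool" where
  "enum_operator \<Gamma> \<longleftrightarrow> (\<forall>(\<alpha>, \<phi>) \<in> \<Gamma>. finite \<alpha>) \<and>
     ce {prod_encode (set_encode (code_basic ` \<alpha>), code_basic \<phi>) | \<alpha> \<phi>. (\<alpha>, \<phi>) \<in> \<Gamma>}"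

definition enum_apply :: "(basic set \<times> basic) set \<Rightarrow> basic set \<Rightarrow> basic set" where
  "enum_apply \<Gamma> X = {\<phi>. \<exists>\<alpha>. (\<alpha>, \<phi>) \<in> \<Gamma> \<and> \<alpha> \<subseteq> X}"

definition comp_embedding :: "(basic set \<times> basic) set \<Rightarrow> nat struct set \<Rightarrow> nat struct set \<Rightarrow> bool" where
  "comp_embedding \<Gamma> K0 K1 \<longleftrightarrow> enum_operator \<Gamma> \<and>
     (\<forall>A \<in> K0. \<exists>B \<in> K1. enum_apply \<Gamma> (diag A) = diag B) \<and>
     (\<forall>A \<in> K0. \<forall>B \<in> K0. \<forall>A' B'. enum_apply \<Gamma> (diag A) = diag A' \<longrightarrow>
        enum_apply \<Gamma> (diag B) = diag B' \<longrightarrow> (iso A B \<longleftrightarrow> iso A' B'))"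

definition leq_c :: "nat struct set \<Rightarrow> nat struct set \<Rightarrow> bool" where
  "leq_c K0 K1 \<longleftrightarrow> (\<exists>\<Gamma>. comp_embedding \<Gamma> K0 K1)"

end

theory Submission
  imports Defs
begin


definition computes :: "recf \<Rightarrow> (nat list \<Rightarrow> nat) \<Rightarrow> nat \<Rightarrow> bool" where
  "computes f F k \<longleftrightarrow> (\<forall>xs. length xs = k \<longrightarrow> (\<forall>y. eval f xs y \<longleftrightarrow> y = F xs))"

lemma computesD: "computes f F k \<Longrightarrow> length xs = k \<Longrightarrow> eval f xs y \<longleftrightarrow> y = F xs"
  unfolding computes_def by blast

lemma computes_cong: "computes f F k \<Longrightarrow> (\<And>xs. length xs = k \<Longrightarrow> F xs = G xs) \<Longrightarrow> computes f G k"
  unfolding computes_def by metis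

lemma comp_Z: "computes Z (\<lambda>_. 0) k"
  unfolding computes_def by (auto intro: eval_Z elim: eval.cases)

lemma comp_S: "computes S (\<lambda>xs. Suc (xs ! 0)) 1"
  unfolding computes_def
proof (intro allI impI)
  fix xs :: "nat list" and y assume "length xs = 1"
  then obtain x where "xs = [x]" by (cases xs) auto
  then show "eval S xs y = (y = Suc (xs ! 0))" by (auto intro: eval_S elim: eval.cases)
qed

lemma comp_Id: "i < k \<Longrightarrow> computes (Id i) (\<lambda>xs. xs ! i) k"
  unfolding computes_def by (auto intro: eval_Id elim: eval.cases)

lemma comp_Cn:
  assumes f: "computes f F (length gs)" and len: "length Gs = length gs"
    and gs: "\<And>i. i < length gs \<Longrightarrow> computes (gs ! i) (Gs ! i) k"
  shows "computes (Cn f gs) (\<lambda>xs. F (map (\<lambda>G. G xs) Gs)) k"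
  unfolding computes_def
proof (intro allI impI iffI)
  fix xs :: "nat list" and y assume lx: "length xs = k"
  {
    assume "eval (Cn f gs) xs y"
    then obtain ys where ys: "length ys = length gs" "\<forall>i < length gs. eval (gs ! i) xs (ys ! i)"
      "eval f ys y" by (auto elim: eval.cases)
    have "ys = map (\<lambda>G. G xs) Gs"
      apply (rule nth_equalityI) using ys len gs computesD[OF gs lx] by auto
    then show "y = F (map (\<lambda>G. G xs) Gs)" using ys(3) computesD[OF f] ys(1) by auto
  }
  {
    assume y: "y = F (map (\<lambda>G. G xs) Gs)"
    show "eval (Cn f gs) xs y"
      apply (rule eval_Cn[where ys="map (\<lambda>G. G xs) Gs"])
      using len gs computesD[OF gs lx] computesD[OF f] y by auto
  }
qed

fun prrec :: "(nat list \<Rightarrow> nat) \<Rightarrow> (nat list \<Rightarrow> nat) \<Rightarrow> nat \<Rightarrow> nat list \<Rightarrow> nat" where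
  "prrec F G 0 xs = F xs"
| "prrec F G (Suc n) xs = G (prrec F G n xs # n # xs)"

lemma comp_Pr:
  assumes f: "computes f F k" and g: "computes g G (Suc (Suc k))"
  shows "computes (Pr f g) (\<lambda>xs. prrec F G (hd xs) (tl xs)) (Suc k)"
  unfolding computes_def
proof (rule allI, rule impI)
  fix xs :: "nat list" assume "length xs = Suc k"
  then obtain n ys where xs: "xs = n # ys" "length ys = k" by (cases xs) auto
  have "\<forall>y. eval (Pr f g) (n # ys) y \<longleftrightarrow> y = prrec F G n ys"
  proof (induction n)
    case 0
    show ?case
      using computesD[OF f xs(2)] by (auto intro: eval_Pr0 elim: eval.cases)
  next
    case (Suc n)
    show ?case
    proof (intro allI iffI)
      fix y assume "eval (Pr f g) (Suc n # ys) y"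
      then obtain r where "eval (Pr f g) (n # ys) r" "eval g (r # n # ys) y"
        by (auto elim: eval.cases)
      then show "y = prrec F G (Suc n) ys" using Suc computesD[OF g, of "r # n # ys"] xs by auto
    next
      fix y assume "y = prrec F G (Suc n) ys"
      then show "eval (Pr f g) (Suc n # ys) y"
        using Suc computesD[OF g, of "prrec F G n ys # n # ys"] xs
        by (auto intro: eval_PrS)
    qed
  qed
  then show "\<forall>y. eval (Pr f g) xs y = (y = prrec F G (hd xs) (tl xs))" using xs by auto
qed

lemma comp_Mn:
  assumes f: "computes f F (Suc k)" and l: "length xs = k"
  shows "eval (Mn f) xs y \<longleftrightarrow> (F (y # xs) = 0 \<and> (\<forall>z<y. F (z # xs) \<noteq> 0))"
proof
  assume "eval (Mn f) xs y"
  then have a: "eval f (y # xs) 0" and b: "\<forall>z < y. \<exists>v. v \<noteq> 0 \<and> eval f (z # xs) v"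
    by (auto elim: eval.cases)
  have l': "\<And>z. length (z # xs) = Suc k" using l by simp
  show "F (y # xs) = 0 \<and> (\<forall>z<y. F (z # xs) \<noteq> 0)"
  proof
    show "F (y # xs) = 0" using a computesD[OF f l'] by simp
    show "\<forall>z<y. F (z # xs) \<noteq> 0"
    proof (intro allI impI)
      fix z assume "z < y"
      then obtain v where "v \<noteq> 0" "eval f (z # xs) v" using b by blast
      then show "F (z # xs) \<noteq> 0" using computesD[OF f l'] by simp
    qed
  qed
next
  assume "F (y # xs) = 0 \<and> (\<forall>z<y. F (z # xs) \<noteq> 0)"
  then show "eval (Mn f) xs y"
    using computesD[OF f] l by (auto intro!: eval_Mn)
qed


lemma comp_Mn':
  assumes f: "computes f F k'" and l: "k' = Suc (length xs)"
  shows "eval (Mn f) xs y \<longleftrightarrow> (F (y # xs) = 0 \<and> (\<forall>z<y. F (z # xs) \<noteq> 0))"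
  using comp_Mn[of f F "length xs" xs y] f l by simp

definition "r_add = Pr (Id 0) (Cn S [Id 0])"
definition "r_mul = Pr Z (Cn r_add [Id 0, Id 2])"
definition "r_p2 = Pr (Cn S [Z]) (Cn r_add [Id 0, Id 0])"
definition "r_pred = Pr Z (Id 1)"
definition "r_tsub = Pr (Id 0) (Cn r_pred [Id 0])"
definition "r_isz = Pr (Cn S [Z]) Z"
definition "r_eqt = Cn r_isz [Cn r_add [Cn r_tsub [Id 0, Id 1], Cn r_tsub [Id 1, Id 0]]]"

lemma comp_Cn1: "computes f F 1 \<Longrightarrow> computes g G k \<Longrightarrow> computes (Cn f [g]) (\<lambda>xs. F [G xs]) k"
  using comp_Cn[of f F "[g]" "[G]" k] by (simp add: less_Suc_eq)

lemma comp_Cn2: "computes f F 2 \<Longrightarrow> computes g G k \<Longrightarrow> computes h H k \<Longrightarrow>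
   computes (Cn f [g, h]) (\<lambda>xs. F [G xs, H xs]) k"
proof -
  assume a: "computes f F 2" "computes g G k" "computes h H k"
  have "\<And>i. i < length [g, h] \<Longrightarrow> computes ([g, h] ! i) ([G, H] ! i) k"
    using a by (auto simp: less_Suc_eq)
  then show ?thesis using comp_Cn[of f F "[g, h]" "[G, H]" k] a(1) by (simp add: numeral_2_eq_2)
qed

lemma len2: "length xs = 2 \<Longrightarrow> xs = [xs!0, xs!1]"
  by (cases xs; cases "tl xs") auto
lemma len1: "length xs = 1 \<Longrightarrow> xs = [xs!0]"
  by (cases xs) auto

lemma cong2: "computes f F 2 \<Longrightarrow> (\<And>a b. F [a, b] = G [a, b]) \<Longrightarrow> computes f G 2"
  by (erule computes_cong) (metis len2)
lemma cong1: "computes f F 1 \<Longrightarrow> (\<And>a. F [a] = G [a]) \<Longrightarrow> computes f G 1"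
  by (erule computes_cong) (metis len1)

lemma comp_Pr':
  "computes f F k \<Longrightarrow> computes g G (k + 2) \<Longrightarrow> k' = Suc k \<Longrightarrow>
   computes (Pr f g) (\<lambda>xs. prrec F G (hd xs) (tl xs)) k'"
  using comp_Pr[of f F k g G] by (simp add: numeral_2_eq_2)

lemma comp_add: "computes r_add (\<lambda>xs. xs!0 + xs!1) 2"
proof -
  have h: "computes r_add (\<lambda>xs. prrec (\<lambda>xs. xs!0) (\<lambda>xs. Suc (xs!0)) (hd xs) (tl xs)) 2"
    unfolding r_add_def
    apply (rule comp_Pr'[where k=1])
      apply (rule comp_Id, simp)
     apply (rule computes_cong, rule comp_Cn1[OF comp_S], rule comp_Id)
    by simp_all
  have eq: "prrec (\<lambda>xs. xs!0) (\<lambda>xs. Suc (xs!0)) n ys = n + ys!0" for n ys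
    by (induction n) auto
  show ?thesis
    by (rule cong2[OF h]) (simp add: eq[simplified])
qed

lemma comp_mul: "computes r_mul (\<lambda>xs. xs!0 * xs!1) 2"
proof -
  have h: "computes r_mul (\<lambda>xs. prrec (\<lambda>xs. 0) (\<lambda>xs. xs!0 + xs!2) (hd xs) (tl xs)) 2"
    unfolding r_mul_def
    apply (rule comp_Pr'[where k=1])
      apply (rule comp_Z)
     apply (rule computes_cong, rule comp_Cn2[OF comp_add])
       apply (rule comp_Id, simp)+
    by simp_all
  have eq: "prrec (\<lambda>xs. 0) (\<lambda>xs. xs!0 + xs!2) n ys = n * ys!0" for n ys
    by (induction n) auto
  show ?thesis
    by (rule cong2[OF h]) (simp add: eq[simplified])
qed

lemma comp_p2: "computes r_p2 (\<lambda>xs. 2 ^ (xs!0)) 1"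
proof -
  have h: "computes r_p2 (\<lambda>xs. prrec (\<lambda>xs. 1) (\<lambda>xs. xs!0 + xs!0) (hd xs) (tl xs)) 1"
    unfolding r_p2_def
    apply (rule comp_Pr'[where k=0])
      apply (rule computes_cong, rule comp_Cn1[OF comp_S comp_Z], simp)
     apply (rule computes_cong, rule comp_Cn2[OF comp_add])
       apply (rule comp_Id, simp)+
    by simp_all
  have eq: "prrec (\<lambda>xs. 1) (\<lambda>xs. xs!0 + xs!0) n ys = 2 ^ n" for n ys
    by (induction n) auto
  show ?thesis
    by (rule cong1[OF h]) (simp add: eq[simplified])
qed

lemma comp_pred: "computes r_pred (\<lambda>xs. xs!0 - 1) 1"
proof -
  have h: "computes r_pred (\<lambda>xs. prrec (\<lambda>xs. 0) (\<lambda>xs. xs!1) (hd xs) (tl xs)) 1"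
    unfolding r_pred_def
    apply (rule comp_Pr'[where k=0])
      apply (rule comp_Z)
     apply (rule comp_Id)
    by simp_all
  have eq: "prrec (\<lambda>xs. 0) (\<lambda>xs. xs!1) n ys = n - 1" for n ys
    by (induction n) auto
  show ?thesis
    by (rule cong1[OF h]) (simp add: eq[simplified])
qed

lemma comp_tsub: "computes r_tsub (\<lambda>xs. xs!1 - xs!0) 2"
proof -
  have h: "computes r_tsub (\<lambda>xs. prrec (\<lambda>xs. xs!0) (\<lambda>xs. xs!0 - 1) (hd xs) (tl xs)) 2"
    unfolding r_tsub_def
    apply (rule comp_Pr'[where k=1])
      apply (rule comp_Id, simp)
     apply (rule computes_cong, rule comp_Cn1[OF comp_pred], rule comp_Id)
    by simp_all
  have eq: "prrec (\<lambda>xs. xs!0) (\<lambda>xs. xs!0 - 1) n ys = ys!0 - n" for n ys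
    by (induction n) auto
  show ?thesis
    by (rule cong2[OF h]) (simp add: eq[simplified])
qed

lemma comp_isz: "computes r_isz (\<lambda>xs. if xs!0 = 0 then 1 else 0) 1"
proof -
  have h: "computes r_isz (\<lambda>xs. prrec (\<lambda>xs. 1) (\<lambda>xs. 0) (hd xs) (tl xs)) 1"
    unfolding r_isz_def
    apply (rule comp_Pr'[where k=0])
      apply (rule computes_cong, rule comp_Cn1[OF comp_S comp_Z], simp)
    by (rule comp_Z) simp
  have eq: "prrec (\<lambda>xs. 1) (\<lambda>xs. 0) n ys = (if n = 0 then 1 else 0)" for n ys
    by (cases n) auto
  show ?thesis
    by (rule cong1[OF h]) (simp add: eq[simplified])
qed

lemma comp_eqt: "computes r_eqt (\<lambda>xs. if xs!0 = xs!1 then 1 else 0) 2"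
proof -
  have h: "computes r_eqt (\<lambda>xs. if (xs!1 - xs!0) + (xs!0 - xs!1) = 0 then 1 else 0) 2"
    unfolding r_eqt_def
    apply (rule computes_cong, rule comp_Cn1[OF comp_isz])
     apply (rule comp_Cn2[OF comp_add])
      apply (rule comp_Cn2[OF comp_tsub]; rule comp_Id; simp)
     apply (rule comp_Cn2[OF comp_tsub]; rule comp_Id; simp)
    by simp
  then show ?thesis by (rule computes_cong) auto
qed


lemma map_nth_tl: "map (nth xs) [1..<length xs] = tl xs"
  by (rule nth_equalityI) (auto simp: nth_tl)

lemma comp_Cn_ids:
  assumes "computes f F (Suc k)" "computes g G k"
  shows "computes (Cn f (g # map Id [0..<k])) (\<lambda>xs. F (G xs # xs)) k"
proof -
  have "computes (Cn f (g # map Id [0..<k])) (\<lambda>xs. F (map (\<lambda>G. G xs) (G # map (\<lambda>i xs. xs ! i) [0..<k]))) k"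
    apply (rule comp_Cn)
    using assms by (auto simp: nth_Cons' intro!: comp_Id)
  then show ?thesis
  proof (rule computes_cong)
    fix xs :: "nat list" assume "length xs = k"
    then show "F (map (\<lambda>G. G xs) (G # map (\<lambda>i xs. xs ! i) [0..<k])) = F (G xs # xs)"
      using map_nth[of xs] by (simp add: comp_def)
  qed
qed

lemma comp_Cn_tl:
  assumes "computes f F (Suc k)"
  shows "computes (Cn f (map Id [1..<k+2])) (\<lambda>xs. F (tl xs)) (k+2)"
proof -
  have a: "computes f F (length (map Id [1..<k+2]))" using assms by (simp del: upt_Suc)
  have b: "\<And>i. i < length (map Id [1..<k+2]) \<Longrightarrow>
     computes (map Id [1..<k+2] ! i) (map (\<lambda>i xs. xs ! i) [1..<k+2] ! i) (k+2)"
    by (auto simp del: upt_Suc intro!: comp_Id)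
  have "computes (Cn f (map Id [1..<k+2])) (\<lambda>xs. F (map (\<lambda>G. G xs) (map (\<lambda>i xs. xs ! i) [1..<k+2]))) (k+2)"
    by (rule comp_Cn[OF a _ b]) simp
  then show ?thesis
  proof (rule computes_cong)
    fix xs :: "nat list" assume "length xs = k + 2"
    then show "F (map (\<lambda>G. G xs) (map (\<lambda>i xs. xs ! i) [1..<k+2])) = F (tl xs)"
      using map_nth_tl[of xs] by (simp del: upt_Suc add: comp_def)
  qed
qed

datatype ex = V nat | Zer | Sc ex | Add ex ex | Mul ex ex | P2 ex | Eqt ex ex | BSum ex ex

fun sem :: "ex \<Rightarrow> nat list \<Rightarrow> nat" where
  "sem (V i) xs = xs ! i"
| "sem Zer xs = 0"
| "sem (Sc e) xs = Suc (sem e xs)"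
| "sem (Add a b) xs = sem a xs + sem b xs"
| "sem (Mul a b) xs = sem a xs * sem b xs"
| "sem (P2 a) xs = 2 ^ sem a xs"
| "sem (Eqt a b) xs = (if sem a xs = sem b xs then 1 else 0)"
| "sem (BSum m e) xs = (\<Sum>j < sem m xs. sem e (j # xs))"

fun wfe :: "nat \<Rightarrow> ex \<Rightarrow> bool" where
  "wfe k (V i) = (i < k)"
| "wfe k Zer = True"
| "wfe k (Sc e) = wfe k e"
| "wfe k (Add a b) = (wfe k a \<and> wfe k b)"
| "wfe k (Mul a b) = (wfe k a \<and> wfe k b)"
| "wfe k (P2 a) = wfe k a"
| "wfe k (Eqt a b) = (wfe k a \<and> wfe k b)"
| "wfe k (BSum m e) = (wfe k m \<and> wfe (Suc k) e)"

fun rf :: "nat \<Rightarrow> ex \<Rightarrow> recf" where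
  "rf k (V i) = Id i"
| "rf k Zer = Z"
| "rf k (Sc e) = Cn S [rf k e]"
| "rf k (Add a b) = Cn r_add [rf k a, rf k b]"
| "rf k (Mul a b) = Cn r_mul [rf k a, rf k b]"
| "rf k (P2 a) = Cn r_p2 [rf k a]"
| "rf k (Eqt a b) = Cn r_eqt [rf k a, rf k b]"
| "rf k (BSum m e) = Cn (Pr Z (Cn r_add [Id 0, Cn (rf (Suc k) e) (map Id [1..<k+2])])) (rf k m # map Id [0..<k])"

lemma prrec_sum: "prrec (\<lambda>_. 0) (\<lambda>zs. zs ! 0 + E (tl zs)) n xs = (\<Sum>j<n. E (j # xs))"
  by (induction n) auto

lemma comp_rf: "wfe k e \<Longrightarrow> computes (rf k e) (sem e) k"
proof (induction e arbitrary: k)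
  case (V i) then show ?case by (auto intro: comp_Id)
next
  case Zer then show ?case using comp_Z by simp
next
  case (Sc e) then show ?case using comp_Cn1[OF comp_S] by fastforce
next
  case (Add a b) then show ?case using comp_Cn2[OF comp_add] by fastforce
next
  case (Mul a b) then show ?case using comp_Cn2[OF comp_mul] by fastforce
next
  case (P2 a) then show ?case using comp_Cn1[OF comp_p2] by fastforce
next
  case (Eqt a b) then show ?case using comp_Cn2[OF comp_eqt] by fastforce
next
  case (BSum m e)
  have he: "computes (rf (Suc k) e) (sem e) (Suc k)" using BSum by auto
  have hm: "computes (rf k m) (sem m) k" using BSum by auto
  have g: "computes (Cn r_add [Id 0, Cn (rf (Suc k) e) (map Id [1..<k+2])])
      (\<lambda>zs. zs ! 0 + sem e (tl zs)) (k + 2)"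
    apply (rule computes_cong, rule comp_Cn2[OF comp_add])
      apply (rule comp_Id, simp)
     apply (rule comp_Cn_tl[OF he])
    by simp
  have p: "computes (Pr Z (Cn r_add [Id 0, Cn (rf (Suc k) e) (map Id [1..<k+2])]))
      (\<lambda>xs. prrec (\<lambda>_. 0) (\<lambda>zs. zs ! 0 + sem e (tl zs)) (hd xs) (tl xs)) (Suc k)"
    by (rule comp_Pr'[OF comp_Z g refl])
  show ?case
    using comp_Cn_ids[OF p hm] by (simp add: prrec_sum)
qed


datatype tm = P nat | PP nat nat

fun itm :: "nat list \<Rightarrow> tm \<Rightarrow> nat" where
  "itm ps (P i) = ps ! i"
| "itm ps (PP i j) = prod_encode (ps ! i, ps ! j)"

definition mkb :: "nat \<Rightarrow> nat \<Rightarrow> nat \<Rightarrow> basic" where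
  "mkb k u v = (if k = 0 then Less u v else if k = 1 then Eq u v else if k = 2 then NLess u v else NEq u v)"

fun ib :: "nat list \<Rightarrow> nat \<times> tm \<times> tm \<Rightarrow> basic" where
  "ib ps (k, t1, t2) = mkb k (itm ps t1) (itm ps t2)"

definition interp :: "nat list \<Rightarrow> (nat \<times> tm \<times> tm) list \<times> (nat \<times> tm \<times> tm) \<Rightarrow> basic set \<times> basic" where
  "interp ps s = (set (map (ib ps) (fst s)), ib ps (snd s))"

definition out :: "nat \<Rightarrow> (nat \<times> tm \<times> tm) list \<times> (tm \<times> tm) \<Rightarrow> (nat \<times> tm \<times> tm) list \<times> (nat \<times> tm \<times> tm)" where
  "out k s = (fst s, (k, fst (snd s), snd (snd s)))"

definition "shL1 = ([(0, P 0, P 2), (1, P 1, P 1)], (PP 0 1, PP 2 1))"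
definition "shL2 = ([(0, P 0, P 2), (3, P 1, P 3)], (PP 0 1, PP 2 3))"
definition "shL3 = ([(1, P 0, P 0), (0, P 1, P 3)], (PP 0 1, PP 0 3))"
definition "shM1 = ([(0, P 2, P 0), (1, P 1, P 1)], (PP 0 1, PP 2 1))"
definition "shM2 = ([(0, P 2, P 0), (3, P 1, P 3)], (PP 0 1, PP 2 3))"
definition "shM3 = ([(1, P 0, P 0), (0, P 3, P 1)], (PP 0 1, PP 0 3))"
definition "shE1 = ([(1, P 0, P 0)], (PP 0 0, PP 0 0))"
definition "shE2 = ([(3, P 0, P 1)], (PP 0 1, PP 0 1))"

definition shapes where
  "shapes = map (out 0) [shL1, shL2, shL3] @ map (out 1) [shE1, shE2]
     @ map (out 2) [shM1, shM2, shM3, shE1, shE2] @ map (out 3) [shL1, shL2, shL3, shM1, shM2, shM3]"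

definition Gam :: "(basic set \<times> basic) set" where
  "Gam = {interp ps s | ps s. length ps = 4 \<and> s \<in> set shapes}"

definition codep :: "basic set \<times> basic \<Rightarrow> nat" where
  "codep g = prod_encode (set_encode (code_basic ` fst g), code_basic (snd g))"

fun tmok :: "tm \<Rightarrow> bool" where
  "tmok (P i) = (i < 4)"
| "tmok (PP i j) = (i < 4 \<and> j < 4)"

definition sbok :: "nat \<times> tm \<times> tm \<Rightarrow> bool" where
  "sbok b = (fst b < 4 \<and> tmok (fst (snd b)) \<and> tmok (snd (snd b)))"

definition shok :: "(nat \<times> tm \<times> tm) list \<times> (nat \<times> tm \<times> tm) \<Rightarrow> bool" where
  "shok s = ((\<forall>b\<in>set (fst s). sbok b) \<and> sbok (snd s) \<and> distinct (map fst (fst s)))"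

lemma shapes_ok: "\<forall>s\<in>set shapes. shok s"
  by (simp add: shapes_def out_def shL1_def shL2_def shL3_def shM1_def shM2_def shM3_def
       shE1_def shE2_def shok_def sbok_def)

section \<open>Expressions computing codes\<close>

definition pe_ex :: "ex \<Rightarrow> ex \<Rightarrow> ex" where
  "pe_ex a b = Add (BSum (Sc (Add a b)) (V 0)) a"

lemma sum_triangle: "(\<Sum>j<Suc n. (j # xs) ! 0) = triangle n"
  by (induction n) auto

lemma sem_pe: "sem (pe_ex a b) xs = prod_encode (sem a xs, sem b xs)"
  unfolding pe_ex_def sem.simps sum_triangle by (simp add: prod_encode_def)

fun ext :: "tm \<Rightarrow> ex" where
  "ext (P i) = V i"
| "ext (PP i j) = pe_ex (V i) (V j)"

definition cst :: "nat \<Rightarrow> ex" where "cst k = (Sc ^^ k) Zer"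

lemma sem_cst: "sem (cst k) xs = k"
  unfolding cst_def by (induction k) auto

fun exb :: "nat \<times> tm \<times> tm \<Rightarrow> ex" where
  "exb (k, t1, t2) = Add (Mul (cst 4) (pe_ex (ext t1) (ext t2))) (cst k)"

definition sumex :: "ex list \<Rightarrow> ex" where "sumex es = foldr Add es Zer"

lemma sem_sumex: "sem (sumex es) xs = sum_list (map (\<lambda>e. sem e xs) es)"
  unfolding sumex_def by (induction es) auto

definition exs :: "(nat \<times> tm \<times> tm) list \<times> (nat \<times> tm \<times> tm) \<Rightarrow> ex" where
  "exs s = pe_ex (sumex (map (\<lambda>b. P2 (exb b)) (fst s))) (exb (snd s))"

lemma code_mkb: "k < 4 \<Longrightarrow> code_basic (mkb k u v) = 4 * prod_encode (u, v) + k"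
  unfolding mkb_def by (auto simp: numeral_eq_Suc less_Suc_eq)

lemma sem_ext: "sem (ext t) xs = itm xs t"
  by (cases t) (auto simp: sem_pe)

lemma sem_exb: "sbok b \<Longrightarrow> sem (exb b) xs = code_basic (ib xs b)"
  by (cases b) (auto simp: sbok_def sem_pe sem_cst sem_ext code_mkb)

lemma code_ib_mod: "sbok b \<Longrightarrow> code_basic (ib xs b) mod 4 = fst b"
  by (cases b) (auto simp: sbok_def code_mkb)

lemma set_encode_list: "distinct xs \<Longrightarrow> set_encode (set xs) = sum_list (map (\<lambda>n. 2 ^ n) xs)"
  by (induction xs) auto

lemma sem_exs:
  assumes "shok s"
  shows "sem (exs s) xs = codep (interp xs s)"
proof -
  obtain al ph where s: "s = (al, ph)" by (cases s)
  have ok: "\<forall>b\<in>set al. sbok b" "sbok ph" "distinct (map fst al)" using assms s by (auto simp: shok_def)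
  have "map fst al = map (\<lambda>b. code_basic (ib xs b) mod 4) al"
    using ok(1) code_ib_mod by (auto intro!: map_cong)
  then have "distinct (map (\<lambda>b. code_basic (ib xs b) mod 4) al)" using ok(3) by metis
  then have d: "distinct (map (\<lambda>b. code_basic (ib xs b)) al)"
    by (simp add: distinct_map inj_on_def)
  have "code_basic ` set (map (ib xs) al) = set (map (\<lambda>b. code_basic (ib xs b)) al)" by auto
  then have "set_encode (code_basic ` set (map (ib xs) al)) = sum_list (map (\<lambda>b. 2 ^ code_basic (ib xs b)) al)"
    using set_encode_list[OF d] by (simp add: comp_def)
  moreover have "sem (sumex (map (\<lambda>b. P2 (exb b)) al)) xs = sum_list (map (\<lambda>b. 2 ^ code_basic (ib xs b)) al)"
    using ok(1) by (simp add: sem_sumex comp_def sem_exb cong: map_cong)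
  ultimately show ?thesis
    using ok by (simp add: s exs_def sem_pe codep_def interp_def sem_exb)
qed


definition "Tex = sumex (map (\<lambda>s. Eqt (V 5) (exs s)) shapes)"
definition "chi = BSum (Sc (V 0)) (BSum (Sc (V 1)) (BSum (Sc (V 2)) (BSum (Sc (V 3)) Tex)))"
definition "fmain = Mn (Cn r_isz [rf 2 chi])"

lemma wfe_pe: "wfe k a \<Longrightarrow> wfe k b \<Longrightarrow> wfe k (pe_ex a b)"
  by (simp add: pe_ex_def)

lemma wfe_cst: "wfe k (cst n)"
  unfolding cst_def by (induction n) auto

lemma wfe_ext: "tmok t \<Longrightarrow> 4 \<le> k \<Longrightarrow> wfe k (ext t)"
  by (cases t) (auto simp: wfe_pe)

lemma wfe_exb: "sbok b \<Longrightarrow> 4 \<le> k \<Longrightarrow> wfe k (exb b)"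
  by (cases b) (auto simp: sbok_def wfe_pe wfe_cst wfe_ext)

lemma wfe_sumex: "(\<forall>e\<in>set es. wfe k e) \<Longrightarrow> wfe k (sumex es)"
  unfolding sumex_def by (induction es) auto

lemma wfe_exs: "shok s \<Longrightarrow> 4 \<le> k \<Longrightarrow> wfe k (exs s)"
  unfolding exs_def shok_def
  by (auto simp del: exb.simps intro!: wfe_pe wfe_sumex wfe_exb)

lemma wfe_chi: "wfe 2 chi"
  unfolding chi_def Tex_def using shapes_ok
  by (auto intro!: wfe_sumex wfe_exs)

lemma itm_append: "tmok t \<Longrightarrow> length ps = 4 \<Longrightarrow> itm (ps @ rest) t = itm ps t"
  by (cases t) (auto simp: nth_append)

lemma ib_append: "sbok b \<Longrightarrow> length ps = 4 \<Longrightarrow> ib (ps @ rest) b = ib ps b"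
  by (cases b) (auto simp: sbok_def itm_append)

lemma interp_append: "shok s \<Longrightarrow> length ps = 4 \<Longrightarrow> interp (ps @ rest) s = interp ps s"
  unfolding interp_def shok_def by (auto simp: ib_append)

lemma T_nz: "sem Tex [a, b, c, d, y, x] \<noteq> 0 \<longleftrightarrow> (\<exists>s\<in>set shapes. x = codep (interp [a, b, c, d] s))"
proof -
  have "sem Tex [a, b, c, d, y, x] = sum_list (map (\<lambda>s. if x = codep (interp [a, b, c, d] s) then 1 else 0) shapes)"
    unfolding Tex_def sem_sumex map_map comp_def
  proof (intro arg_cong[where f=sum_list] map_cong refl)
    fix s assume "s \<in> set shapes"
    then have ok: "shok s" using shapes_ok by auto
    have "sem (exs s) [a, b, c, d, y, x] = codep (interp [a, b, c, d] s)"
      using sem_exs[OF ok] interp_append[OF ok, of "[a,b,c,d]" "[y,x]"] by simp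
    then show "sem (Eqt (V 5) (exs s)) [a, b, c, d, y, x] = (if x = codep (interp [a, b, c, d] s) then 1 else 0)"
      by simp
  qed
  then show ?thesis by (auto simp: sum_list_eq_0_iff)
qed

lemma sum_nz: "(\<Sum>i<(n::nat). f i) \<noteq> (0::nat) \<longleftrightarrow> (\<exists>i<n. f i \<noteq> 0)"
proof
  assume "(\<Sum>i<n. f i) \<noteq> 0"
  then show "\<exists>i<n. f i \<noteq> 0" by (metis lessThan_iff sum.neutral)
next
  assume "\<exists>i<n. f i \<noteq> 0"
  then obtain i where "i < n" "f i \<noteq> 0" by blast
  moreover have "f i \<le> (\<Sum>i<n. f i)" by (rule member_le_sum) (use \<open>i < n\<close> in auto)
  ultimately show "(\<Sum>i<n. f i) \<noteq> 0" by linarith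
qed

lemma sem_chi: "sem chi [y, x] = (\<Sum>a<Suc y. \<Sum>b<Suc y. \<Sum>c<Suc y. \<Sum>d<Suc y. sem Tex [d, c, b, a, y, x])"
  unfolding chi_def by (simp del: sum.lessThan_Suc)

lemma chi_nz: "sem chi [y, x] \<noteq> 0 \<longleftrightarrow>
  (\<exists>a<Suc y. \<exists>b<Suc y. \<exists>c<Suc y. \<exists>d<Suc y. \<exists>s\<in>set shapes. x = codep (interp [d, c, b, a] s))"
  unfolding sem_chi sum_nz T_nz by (rule refl)

lemma len4: "length ps = 4 \<longleftrightarrow> (\<exists>a b c d. ps = [a, b, c, d])"
  by (auto simp: numeral_eq_Suc length_Suc_conv)

lemma fmain_dom: "(\<exists>y. eval fmain [x] y) \<longleftrightarrow> (\<exists>y. sem chi [y, x] \<noteq> 0)"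
proof -
  have c: "computes (Cn r_isz [rf 2 chi]) (\<lambda>xs. if sem chi xs = 0 then 1 else 0) 2"
    using comp_Cn1[OF comp_isz comp_rf[OF wfe_chi]] by simp
  have e: "eval fmain [x] y \<longleftrightarrow> (sem chi [y, x] \<noteq> 0 \<and> (\<forall>z<y. sem chi [z, x] = 0))" for y
  proof -
    have "eval fmain [x] y \<longleftrightarrow> ((if sem chi [y, x] = 0 then 1 else 0) = (0::nat) \<and>
       (\<forall>z<y. (if sem chi [z, x] = 0 then 1 else 0) \<noteq> (0::nat)))"
      unfolding fmain_def by (rule comp_Mn'[OF c]) simp
    then show ?thesis by auto
  qed
  show ?thesis
  proof
    assume "\<exists>y. eval fmain [x] y" then show "\<exists>y. sem chi [y, x] \<noteq> 0" using e by blast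
  next
    assume "\<exists>y. sem chi [y, x] \<noteq> 0"
    then obtain y where "sem chi [y, x] \<noteq> 0" "\<forall>z<y. sem chi [z, x] = 0"
      using exists_least_iff[of "\<lambda>y. sem chi [y, x] \<noteq> 0"] by blast
    then show "\<exists>y. eval fmain [x] y" using e by blast
  qed
qed

lemma ce_Gam: "ce {prod_encode (set_encode (code_basic ` \<alpha>), code_basic \<phi>) | \<alpha> \<phi>. (\<alpha>, \<phi>) \<in> Gam}"
  unfolding ce_def
proof (intro exI[of _ fmain] set_eqI iffI)
  fix x assume "x \<in> {prod_encode (set_encode (code_basic ` \<alpha>), code_basic \<phi>) | \<alpha> \<phi>. (\<alpha>, \<phi>) \<in> Gam}"
  then obtain ps s where ps: "length ps = 4" "s \<in> set shapes" "x = codep (interp ps s)"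
    unfolding Gam_def codep_def by auto (metis fst_conv snd_conv)
  obtain a b c d where "ps = [a,b,c,d]" using len4[THEN iffD1, OF ps(1)] by blast
  then have "d < Suc (a+b+c+d) \<and> c < Suc (a+b+c+d) \<and> b < Suc (a+b+c+d) \<and> a < Suc (a+b+c+d)
     \<and> s \<in> set shapes \<and> x = codep (interp [a, b, c, d] s)" using ps by simp
  then have "sem chi [a+b+c+d, x] \<noteq> 0" unfolding chi_nz by blast
  then show "x \<in> {x. \<exists>y. eval fmain [x] y}" using fmain_dom by auto
next
  fix x assume "x \<in> {x. \<exists>y. eval fmain [x] y}"
  then obtain y where "sem chi [y, x] \<noteq> 0" using fmain_dom by auto
  then obtain a b c d s where "s \<in> set shapes" "x = codep (interp [a, b, c, d] s)"
    using chi_nz by blast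
  then show "x \<in> {prod_encode (set_encode (code_basic ` \<alpha>), code_basic \<phi>) | \<alpha> \<phi>. (\<alpha>, \<phi>) \<in> Gam}"
  proof -
    have g: "interp [a,b,c,d] s \<in> Gam" unfolding Gam_def
      by (rule CollectI, rule exI[of _ "[a,b,c,d]"], rule exI[of _ s]) (simp add: \<open>s \<in> set shapes\<close>)
    show ?thesis
      by (rule CollectI, rule exI[of _ "fst (interp [a,b,c,d] s)"], rule exI[of _ "snd (interp [a,b,c,d] s)"])
        (simp add: g \<open>x = codep (interp [a, b, c, d] s)\<close> codep_def)
  qed
qed

lemma enum_Gam: "enum_operator Gam"
  unfolding enum_operator_def using ce_Gam by (auto simp: Gam_def interp_def)



section \<open>Semantics of Gam\<close>

lemma diag_Less: "Less u v \<in> diag (D, R) \<longleftrightarrow> u \<in> D \<and> v \<in> D \<and> R u v"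
  by (auto simp: diag_def)
lemma diag_Eq: "Eq u v \<in> diag (D, R) \<longleftrightarrow> u \<in> D \<and> u = v"
  by (auto simp: diag_def)
lemma diag_NLess: "NLess u v \<in> diag (D, R) \<longleftrightarrow> u \<in> D \<and> v \<in> D \<and> \<not> R u v"
  by (auto simp: diag_def)
lemma diag_NEq: "NEq u v \<in> diag (D, R) \<longleftrightarrow> u \<in> D \<and> v \<in> D \<and> u \<noteq> v"
  by (auto simp: diag_def)
lemmas diag_mem = diag_Less diag_Eq diag_NLess diag_NEq

abbreviation pe :: "nat \<Rightarrow> nat \<Rightarrow> nat" where "pe a b \<equiv> prod_encode (a, b)"

definition Lw where "Lw X a b c d p q \<longleftrightarrow>
   (Less a c \<in> X \<and> Eq b b \<in> X \<and> p = pe a b \<and> q = pe c b)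
 \<or> (Less a c \<in> X \<and> NEq b d \<in> X \<and> p = pe a b \<and> q = pe c d)
 \<or> (Eq a a \<in> X \<and> Less b d \<in> X \<and> p = pe a b \<and> q = pe a d)"

definition Mw where "Mw X a b c d p q \<longleftrightarrow>
   (Less c a \<in> X \<and> Eq b b \<in> X \<and> p = pe a b \<and> q = pe c b)
 \<or> (Less c a \<in> X \<and> NEq b d \<in> X \<and> p = pe a b \<and> q = pe c d)
 \<or> (Eq a a \<in> X \<and> Less d b \<in> X \<and> p = pe a b \<and> q = pe a d)"

definition Ew where "Ew X a b p q \<longleftrightarrow>
   (Eq a a \<in> X \<and> p = pe a a \<and> q = pe a a)
 \<or> (NEq a b \<in> X \<and> p = pe a b \<and> q = pe a b)"

lemma en_Gam: "\<phi> \<in> enum_apply Gam X \<longleftrightarrow>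
  (\<exists>a b c d. \<exists>s\<in>set shapes. fst (interp [a, b, c, d] s) \<subseteq> X \<and> \<phi> = snd (interp [a, b, c, d] s))"
proof
  assume "\<phi> \<in> enum_apply Gam X"
  then obtain \<alpha> where a: "(\<alpha>, \<phi>) \<in> Gam" "\<alpha> \<subseteq> X" unfolding enum_apply_def by blast
  then obtain ps s where b: "(\<alpha>, \<phi>) = interp ps s" "length ps = 4" "s \<in> set shapes"
    unfolding Gam_def by blast
  obtain a b c d where "ps = [a, b, c, d]" using len4[THEN iffD1, OF b(2)] by blast
  then show "\<exists>a b c d. \<exists>s\<in>set shapes. fst (interp [a, b, c, d] s) \<subseteq> X \<and> \<phi> = snd (interp [a, b, c, d] s)"
    using a b by (metis fst_conv snd_conv)
next
  assume "\<exists>a b c d. \<exists>s\<in>set shapes. fst (interp [a, b, c, d] s) \<subseteq> X \<and> \<phi> = snd (interp [a, b, c, d] s)"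
  then obtain a b c d s where h: "s \<in> set shapes" "fst (interp [a, b, c, d] s) \<subseteq> X" "\<phi> = snd (interp [a, b, c, d] s)"
    by blast
  have "interp [a,b,c,d] s \<in> Gam" unfolding Gam_def
    by (rule CollectI, rule exI[of _ "[a,b,c,d]"], rule exI[of _ s]) (simp add: h(1))
  then have "(fst (interp [a,b,c,d] s), \<phi>) \<in> Gam" using h(3) by simp
  then show "\<phi> \<in> enum_apply Gam X" unfolding enum_apply_def using h(2) by blast
qed

lemma en_Gam2: "\<phi> \<in> enum_apply Gam X \<longleftrightarrow>
  (case \<phi> of Less p q \<Rightarrow> (\<exists>a b c d. Lw X a b c d p q)
   | Eq p q \<Rightarrow> (\<exists>a b. Ew X a b p q)
   | NLess p q \<Rightarrow> (\<exists>a b c d. Mw X a b c d p q \<or> Ew X a b p q)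
   | NEq p q \<Rightarrow> (\<exists>a b c d. Lw X a b c d p q \<or> Mw X a b c d p q))"
  unfolding en_Gam
  by (cases \<phi>) (auto simp: shapes_def out_def shL1_def shL2_def shL3_def shM1_def shM2_def shM3_def
       shE1_def shE2_def interp_def mkb_def Lw_def Mw_def Ew_def)

definition lexR :: "('a \<Rightarrow> 'a \<Rightarrow> bool) \<Rightarrow> 'a \<times> 'a \<Rightarrow> 'a \<times> 'a \<Rightarrow> bool" where
  "lexR R x y \<longleftrightarrow> R (fst x) (fst y) \<or> (fst x = fst y \<and> R (snd x) (snd y))"

definition sqn :: "nat struct \<Rightarrow> nat struct" where
  "sqn A = (prod_encode ` (fst A \<times> fst A), \<lambda>p q. lexR (snd A) (prod_decode p) (prod_decode q))"

definition slin :: "'a struct \<Rightarrow> bool" where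
  "slin A \<longleftrightarrow> (\<forall>a\<in>fst A. \<not> snd A a a) \<and>
     (\<forall>a\<in>fst A. \<forall>b\<in>fst A. \<forall>c\<in>fst A. snd A a b \<longrightarrow> snd A b c \<longrightarrow> snd A a c) \<and>
     (\<forall>a\<in>fst A. \<forall>b\<in>fst A. a \<noteq> b \<longrightarrow> snd A a b \<or> snd A b a)"

lemma sqn_mem: "p \<in> fst (sqn (D, R)) \<longleftrightarrow> (\<exists>a b. p = pe a b \<and> a \<in> D \<and> b \<in> D)"
  by (auto simp: sqn_def)

lemma Gam_diag:
  assumes "slin (D, R)"
  shows "enum_apply Gam (diag (D, R)) = diag (sqn (D, R))"
proof -
  have irr: "\<And>a. a \<in> D \<Longrightarrow> \<not> R a a" and tr: "\<And>a b c. a \<in> D \<Longrightarrow> b \<in> D \<Longrightarrow> c \<in> D \<Longrightarrow> R a b \<Longrightarrow> R b c \<Longrightarrow> R a c"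
    and tot: "\<And>a b. a \<in> D \<Longrightarrow> b \<in> D \<Longrightarrow> a \<noteq> b \<Longrightarrow> R a b \<or> R b a"
    using assms unfolding slin_def fst_conv snd_conv by blast+
  have asy: "\<And>a b. a \<in> D \<Longrightarrow> b \<in> D \<Longrightarrow> R a b \<Longrightarrow> \<not> R b a" using irr tr by blast
  let ?X = "diag (D, R)"
  let ?L = "\<lambda>p q. \<exists>a b c d. p = pe a b \<and> q = pe c d \<and> a \<in> D \<and> b \<in> D \<and> c \<in> D \<and> d \<in> D \<and> (R a c \<or> (a = c \<and> R b d))"
  have sq: "diag (sqn (D, R)) = diag (prod_encode ` (D \<times> D), \<lambda>p q. lexR R (prod_decode p) (prod_decode q))"
    by (simp add: sqn_def)
  have L: "(\<exists>a b c d. Lw ?X a b c d p q) \<longleftrightarrow> ?L p q" for p q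
  proof
    assume "\<exists>a b c d. Lw ?X a b c d p q"
    then show "?L p q" unfolding Lw_def diag_mem by blast
  next
    assume "?L p q"
    then obtain a b c d where h: "p = pe a b" "q = pe c d" "a \<in> D" "b \<in> D" "c \<in> D" "d \<in> D" "R a c \<or> (a = c \<and> R b d)" by blast
    show "\<exists>a b c d. Lw ?X a b c d p q"
    proof (cases "R a c")
      case True
      then show ?thesis using h unfolding Lw_def diag_mem by (cases "b = d") blast+
    next
      case False
      then show ?thesis using h unfolding Lw_def diag_mem by blast
    qed
  qed
  have M: "(\<exists>a b c d. Mw ?X a b c d p q) \<longleftrightarrow> ?L q p" for p q
  proof
    assume "\<exists>a b c d. Mw ?X a b c d p q"
    then show "?L q p" unfolding Mw_def diag_mem by blast
  next
    assume "?L q p"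
    then obtain a b c d where h: "q = pe a b" "p = pe c d" "a \<in> D" "b \<in> D" "c \<in> D" "d \<in> D" "R a c \<or> (a = c \<and> R b d)" by blast
    show "\<exists>a b c d. Mw ?X a b c d p q"
    proof (cases "R a c")
      case True
      then show ?thesis using h unfolding Mw_def diag_mem by (cases "b = d") blast+
    next
      case False
      then show ?thesis using h unfolding Mw_def diag_mem by blast
    qed
  qed
  have E: "(\<exists>a b. Ew ?X a b p q) \<longleftrightarrow> (\<exists>a b. p = pe a b \<and> a \<in> D \<and> b \<in> D \<and> q = p)" for p q
  proof
    assume "\<exists>a b. Ew ?X a b p q"
    then show "\<exists>a b. p = pe a b \<and> a \<in> D \<and> b \<in> D \<and> q = p" unfolding Ew_def diag_mem by blast
  next
    assume "\<exists>a b. p = pe a b \<and> a \<in> D \<and> b \<in> D \<and> q = p"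
    then obtain a b where h: "p = pe a b" "a \<in> D" "b \<in> D" "q = p" by blast
    then show "\<exists>a b. Ew ?X a b p q" unfolding Ew_def diag_mem by (cases "a = b") blast+
  qed
  have Ldiag: "?L p q \<longleftrightarrow> (p \<in> prod_encode ` (D \<times> D) \<and> q \<in> prod_encode ` (D \<times> D) \<and> lexR R (prod_decode p) (prod_decode q))" for p q
    by (auto simp: lexR_def)
  have Mdiag: "?L q p \<or> (\<exists>a b. p = pe a b \<and> a \<in> D \<and> b \<in> D \<and> q = p) \<longleftrightarrow>
     (p \<in> prod_encode ` (D \<times> D) \<and> q \<in> prod_encode ` (D \<times> D) \<and> \<not> lexR R (prod_decode p) (prod_decode q))" for p q
  proof
    assume "?L q p \<or> (\<exists>a b. p = pe a b \<and> a \<in> D \<and> b \<in> D \<and> q = p)"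
    then show "p \<in> prod_encode ` (D \<times> D) \<and> q \<in> prod_encode ` (D \<times> D) \<and> \<not> lexR R (prod_decode p) (prod_decode q)"
      by (auto simp: lexR_def dest: asy irr)
  next
    assume a: "p \<in> prod_encode ` (D \<times> D) \<and> q \<in> prod_encode ` (D \<times> D) \<and> \<not> lexR R (prod_decode p) (prod_decode q)"
    then obtain a b c d where h: "p = pe a b" "q = pe c d" "a \<in> D" "b \<in> D" "c \<in> D" "d \<in> D" by auto
    have "\<not> (R a c \<or> (a = c \<and> R b d))" using a h by (simp add: lexR_def)
    then have "(c = a \<and> d = b) \<or> R c a \<or> (c = a \<and> R d b)" using tot h by metis
    then show "?L q p \<or> (\<exists>a b. p = pe a b \<and> a \<in> D \<and> b \<in> D \<and> q = p)" using h by blast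
  qed
  have Ndiag: "?L p q \<or> ?L q p \<longleftrightarrow>
     (p \<in> prod_encode ` (D \<times> D) \<and> q \<in> prod_encode ` (D \<times> D) \<and> p \<noteq> q)" for p q
  proof
    assume "?L p q \<or> ?L q p"
    then show "p \<in> prod_encode ` (D \<times> D) \<and> q \<in> prod_encode ` (D \<times> D) \<and> p \<noteq> q"
      by (auto dest: irr)
  next
    assume a: "p \<in> prod_encode ` (D \<times> D) \<and> q \<in> prod_encode ` (D \<times> D) \<and> p \<noteq> q"
    then obtain a b c d where h: "p = pe a b" "q = pe c d" "a \<in> D" "b \<in> D" "c \<in> D" "d \<in> D" by auto
    have "a \<noteq> c \<or> b \<noteq> d" using a h by auto
    then have "R a c \<or> R c a \<or> (a = c \<and> (R b d \<or> R d b))" using tot h by metis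
    then show "?L p q \<or> ?L q p" using h by blast
  qed
  show ?thesis
  proof (rule set_eqI)
    fix \<phi>
    show "\<phi> \<in> enum_apply Gam ?X \<longleftrightarrow> \<phi> \<in> diag (sqn (D, R))"
    proof (cases \<phi>)
      case (Less p q)
      have "Less p q \<in> enum_apply Gam ?X \<longleftrightarrow> (\<exists>a b c d. Lw ?X a b c d p q)" by (rule trans[OF en_Gam2]) (simp only: basic.case)
      also have "\<dots> \<longleftrightarrow> ?L p q" by (rule L)
      also have "\<dots> \<longleftrightarrow> Less p q \<in> diag (sqn (D, R))" unfolding sq diag_mem Ldiag by simp
      finally show ?thesis using Less by simp
    next
      case (Eq p q)
      have "Eq p q \<in> enum_apply Gam ?X \<longleftrightarrow> (\<exists>a b. Ew ?X a b p q)" by (rule trans[OF en_Gam2]) (simp only: basic.case)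
      also have "\<dots> \<longleftrightarrow> (\<exists>a b. p = pe a b \<and> a \<in> D \<and> b \<in> D \<and> q = p)" by (rule E)
      also have "\<dots> \<longleftrightarrow> Eq p q \<in> diag (sqn (D, R))" unfolding sq diag_mem by auto
      finally show ?thesis using Eq by simp
    next
      case (NLess p q)
      have "NLess p q \<in> enum_apply Gam ?X \<longleftrightarrow> (\<exists>a b c d. Mw ?X a b c d p q \<or> Ew ?X a b p q)" by (rule trans[OF en_Gam2]) (simp only: basic.case)
      also have "\<dots> \<longleftrightarrow> (\<exists>a b c d. Mw ?X a b c d p q) \<or> (\<exists>a b. Ew ?X a b p q)" by blast
      also have "\<dots> \<longleftrightarrow> ?L q p \<or> (\<exists>a b. p = pe a b \<and> a \<in> D \<and> b \<in> D \<and> q = p)" by (simp only: M E)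
      also have "\<dots> \<longleftrightarrow> NLess p q \<in> diag (sqn (D, R))" unfolding sq diag_mem Mdiag by simp
      finally show ?thesis using NLess by simp
    next
      case (NEq p q)
      have "NEq p q \<in> enum_apply Gam ?X \<longleftrightarrow> (\<exists>a b c d. Lw ?X a b c d p q \<or> Mw ?X a b c d p q)" by (rule trans[OF en_Gam2]) (simp only: basic.case)
      also have "\<dots> \<longleftrightarrow> (\<exists>a b c d. Lw ?X a b c d p q) \<or> (\<exists>a b c d. Mw ?X a b c d p q)" by blast
      also have "\<dots> \<longleftrightarrow> ?L p q \<or> ?L q p" by (simp only: L M)
      also have "\<dots> \<longleftrightarrow> NEq p q \<in> diag (sqn (D, R))" unfolding sq diag_mem Ndiag by simp
      finally show ?thesis using NEq by simp
    qed
  qed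
qed



section \<open>Isomorphisms\<close>

lemma iso_pair: "iso (D, R) (E, Q) \<longleftrightarrow> (\<exists>f. bij_betw f D E \<and> (\<forall>a\<in>D. \<forall>b\<in>D. R a b \<longleftrightarrow> Q (f a) (f b)))"
  by (simp add: iso_def)

lemma iso_sym: "iso A B \<Longrightarrow> iso B A"
proof -
  assume h: "iso A B"
  obtain D R where A: "A = (D, R)" by (cases A)
  obtain E Q where B: "B = (E, Q)" by (cases B)
  obtain f where f: "bij_betw f D E" "\<forall>a\<in>D. \<forall>b\<in>D. R a b \<longleftrightarrow> Q (f a) (f b)"
    using h unfolding A B iso_pair by blast
  let ?g = "inv_into D f"
  have g: "bij_betw ?g E D" using f(1) by (rule bij_betw_inv_into)
  have fg: "\<And>a. a \<in> E \<Longrightarrow> f (?g a) = a" using f(1) by (simp add: bij_betw_def f_inv_into_f)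
  have gD: "\<And>a. a \<in> E \<Longrightarrow> ?g a \<in> D" using g by (meson bij_betwE)
  have "\<forall>a\<in>E. \<forall>b\<in>E. Q a b \<longleftrightarrow> R (?g a) (?g b)"
    using f(2) fg gD by metis
  then show "iso B A" unfolding A B iso_pair using g by blast
qed

lemma iso_trans: "iso A B \<Longrightarrow> iso B C \<Longrightarrow> iso A C"
proof -
  assume h1: "iso A B" and h2: "iso B C"
  obtain D R where A: "A = (D, R)" by (cases A)
  obtain E Q where B: "B = (E, Q)" by (cases B)
  obtain F T where C: "C = (F, T)" by (cases C)
  obtain f where f: "bij_betw f D E" "\<forall>a\<in>D. \<forall>b\<in>D. R a b \<longleftrightarrow> Q (f a) (f b)"
    using h1 unfolding A B iso_pair by blast
  obtain g where g: "bij_betw g E F" "\<forall>a\<in>E. \<forall>b\<in>E. Q a b \<longleftrightarrow> T (g a) (g b)"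
    using h2 unfolding B C iso_pair by blast
  have "bij_betw (g \<circ> f) D F" using f(1) g(1) by (rule bij_betw_trans)
  moreover have "\<forall>a\<in>D. \<forall>b\<in>D. R a b \<longleftrightarrow> T ((g \<circ> f) a) ((g \<circ> f) b)"
    using f g by (auto dest: bij_betwE)
  ultimately show "iso A C" unfolding A C iso_pair by blast
qed

lemma diag_eq_iso: "diag A = diag B \<Longrightarrow> iso A B"
proof -
  assume h: "diag A = diag B"
  obtain D R where A: "A = (D, R)" by (cases A)
  obtain E Q where B: "B = (E, Q)" by (cases B)
  have DE: "D = E"
  proof
    show "D \<subseteq> E" using h unfolding A B by (metis diag_Eq subsetI)
    show "E \<subseteq> D" using h unfolding A B by (metis diag_Eq subsetI)
  qed
  have "\<forall>a\<in>D. \<forall>b\<in>D. R a b \<longleftrightarrow> Q a b"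
    using h unfolding A B by (metis DE diag_Less)
  then show ?thesis unfolding A B iso_pair DE
    by (intro exI[of _ id]) (simp add: DE)
qed

definition sqg :: "'a struct \<Rightarrow> ('a \<times> 'a) struct" where
  "sqg A = (fst A \<times> fst A, lexR (snd A))"

lemma iso_sqn_sqg: "iso (sqn A) (sqg A)"
proof -
  obtain D R where A: "A = (D, R)" by (cases A)
  have "bij_betw prod_decode (prod_encode ` (D \<times> D)) (D \<times> D)"
    by (rule bij_betw_imageI) (auto simp: inj_on_def image_image)
  then show ?thesis unfolding A sqn_def sqg_def fst_conv snd_conv iso_pair
    by (intro exI[of _ prod_decode] conjI) auto
qed

lemma iso_sqg: "iso A B \<Longrightarrow> iso (sqg A) (sqg B)"
proof -
  assume h: "iso A B"
  obtain D R where A: "A = (D, R)" by (cases A)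
  obtain E Q where B: "B = (E, Q)" by (cases B)
  obtain f where f: "bij_betw f D E" "\<forall>a\<in>D. \<forall>b\<in>D. R a b \<longleftrightarrow> Q (f a) (f b)"
    using h unfolding A B iso_pair by blast
  have inj: "\<And>a b. a \<in> D \<Longrightarrow> b \<in> D \<Longrightarrow> f a = f b \<longleftrightarrow> a = b"
    using f(1) by (auto simp: bij_betw_def inj_on_def)
  have "bij_betw (map_prod f f) (D \<times> D) (E \<times> E)" using f(1) f(1) by (rule bij_betw_map_prod)
  moreover have "\<forall>x\<in>D \<times> D. \<forall>y\<in>D \<times> D. lexR R x y \<longleftrightarrow> lexR Q (map_prod f f x) (map_prod f f y)"
    using f(2) inj by (auto simp: lexR_def)
  ultimately show ?thesis unfolding A B sqg_def iso_pair fst_conv snd_conv by blast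
qed

lemma sqg_rev: "sqg (rev_order A) = rev_order (sqg A)"
  by (cases A) (auto simp: sqg_def rev_order_def lexR_def fun_eq_iff)

lemma iso_rev: "iso A B \<Longrightarrow> iso (rev_order A) (rev_order B)"
proof -
  assume h: "iso A B"
  obtain D R where A: "A = (D, R)" by (cases A)
  obtain E Q where B: "B = (E, Q)" by (cases B)
  obtain f where f: "bij_betw f D E" "\<forall>a\<in>D. \<forall>b\<in>D. R a b \<longleftrightarrow> Q (f a) (f b)"
    using h unfolding A B iso_pair by blast
  have "\<forall>a\<in>D. \<forall>b\<in>D. R b a \<longleftrightarrow> Q (f b) (f a)" using f(2) by blast
  then show ?thesis unfolding A B rev_order_def prod.case iso_pair using f(1) by blast
qed

section \<open>Orders omega^n\<close>

lemma lex_irr: "\<not> lex_less xs xs"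
  by (induction xs) auto

lemma lex_trans: "lex_less xs ys \<Longrightarrow> lex_less ys zs \<Longrightarrow> lex_less xs zs"
proof (induction xs arbitrary: ys zs)
  case Nil then show ?case by simp
next
  case (Cons x xs)
  then obtain y ys' where ys: "ys = y # ys'" by (cases ys) auto
  with Cons obtain z zs' where zs: "zs = z # zs'" by (cases zs) auto
  show ?case using Cons ys zs by auto
qed

lemma lex_total: "length xs = length ys \<Longrightarrow> xs \<noteq> ys \<Longrightarrow> lex_less xs ys \<or> lex_less ys xs"
proof (induction xs arbitrary: ys)
  case Nil then show ?case by simp
next
  case (Cons x xs)
  then obtain y ys' where ys: "ys = y # ys'" by (cases ys) auto
  show ?case using Cons ys by (cases "x = y") auto
qed

lemma lex_app: "length xs = length xs' \<Longrightarrow>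
  lex_less (xs @ ys) (xs' @ ys') \<longleftrightarrow> lex_less xs xs' \<or> (xs = xs' \<and> lex_less ys ys')"
proof (induction xs arbitrary: xs')
  case Nil then show ?case by simp
next
  case (Cons x xs)
  then obtain y xs'' where "xs' = y # xs''" by (cases xs') auto
  then show ?case using Cons by auto
qed

lemma slin_omega: "slin (omega_pow n)"
  unfolding slin_def omega_pow_def using lex_irr lex_trans lex_total by auto

lemma slin_rev: "slin A \<Longrightarrow> slin (rev_order A)"
proof -
  assume s: "slin A"
  obtain E Q where B: "A = (E, Q)" by (cases A)
  have s1: "\<forall>a\<in>E. \<not> Q a a" and s2: "\<forall>a\<in>E. \<forall>b\<in>E. \<forall>c\<in>E. Q a b \<longrightarrow> Q b c \<longrightarrow> Q a c"
    and s3: "\<forall>a\<in>E. \<forall>b\<in>E. a \<noteq> b \<longrightarrow> Q a b \<or> Q b a"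
    using s unfolding B slin_def fst_conv snd_conv by blast+
  show ?thesis unfolding B rev_order_def slin_def prod.case fst_conv snd_conv
  proof (intro conjI ballI impI)
    fix a assume "a \<in> E" then show "\<not> Q a a" using s1 by blast
  next
    fix a b c assume "a \<in> E" "b \<in> E" "c \<in> E" "Q b a" "Q c b"
    then show "Q c a" using s2 by blast
  next
    fix a b assume "a \<in> E" "b \<in> E" "a \<noteq> b"
    then show "Q b a \<or> Q a b" using s3 by blast
  qed
qed

lemma slin_iso: "iso A B \<Longrightarrow> slin B \<Longrightarrow> slin A"
proof -
  assume h: "iso A B" and s: "slin B"
  obtain D R where A: "A = (D, R)" by (cases A)
  obtain E Q where B: "B = (E, Q)" by (cases B)
  obtain f where f: "bij_betw f D E" "\<forall>a\<in>D. \<forall>b\<in>D. R a b \<longleftrightarrow> Q (f a) (f b)"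
    using h unfolding A B iso_pair by blast
  have fD: "\<And>a. a \<in> D \<Longrightarrow> f a \<in> E" using f(1) by (meson bij_betwE)
  have inj: "\<And>a b. a \<in> D \<Longrightarrow> b \<in> D \<Longrightarrow> f a = f b \<longleftrightarrow> a = b"
    using f(1) by (auto simp: bij_betw_def inj_on_def)
  have s1: "\<forall>a\<in>E. \<not> Q a a" and s2: "\<forall>a\<in>E. \<forall>b\<in>E. \<forall>c\<in>E. Q a b \<longrightarrow> Q b c \<longrightarrow> Q a c"
    and s3: "\<forall>a\<in>E. \<forall>b\<in>E. a \<noteq> b \<longrightarrow> Q a b \<or> Q b a"
    using s unfolding B slin_def fst_conv snd_conv by blast+
  show ?thesis unfolding A slin_def fst_conv snd_conv
  proof (intro conjI ballI impI)
    fix a assume "a \<in> D" then show "\<not> R a a" using f(2) s1 fD by blast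
  next
    fix a b c assume "a \<in> D" "b \<in> D" "c \<in> D" "R a b" "R b c"
    then show "R a c" using f(2) s2 fD by blast
  next
    fix a b assume "a \<in> D" "b \<in> D" "a \<noteq> b"
    then show "R a b \<or> R b a" using f(2) s3 fD inj by metis
  qed
qed

definition has_min :: "'a struct \<Rightarrow> bool" where
  "has_min A \<longleftrightarrow> (\<exists>m\<in>fst A. \<forall>x\<in>fst A. x \<noteq> m \<longrightarrow> snd A m x)"

lemma has_min_iso: "iso A B \<Longrightarrow> has_min A \<Longrightarrow> has_min B"
proof -
  assume h: "iso A B" and m: "has_min A"
  obtain D R where A: "A = (D, R)" by (cases A)
  obtain E Q where B: "B = (E, Q)" by (cases B)
  obtain f where f: "bij_betw f D E" "\<forall>a\<in>D. \<forall>b\<in>D. R a b \<longleftrightarrow> Q (f a) (f b)"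
    using h unfolding A B iso_pair by blast
  obtain m where m: "m \<in> D" "\<forall>x\<in>D. x \<noteq> m \<longrightarrow> R m x" using m unfolding A has_min_def by auto
  have "f m \<in> E" using f(1) m(1) by (meson bij_betwE)
  moreover have "\<forall>y\<in>E. y \<noteq> f m \<longrightarrow> Q (f m) y"
  proof (intro ballI impI)
    fix y assume "y \<in> E" "y \<noteq> f m"
    then obtain x where "x \<in> D" "y = f x" using f(1) by (auto simp: bij_betw_def)
    then show "Q (f m) y" using m f(2) \<open>y \<noteq> f m\<close> by auto
  qed
  ultimately show ?thesis unfolding B has_min_def by auto
qed

lemma lex_repl0: "length x = k \<Longrightarrow> x \<noteq> replicate k 0 \<Longrightarrow> lex_less (replicate k 0) x"
proof (induction k arbitrary: x)
  case 0 then show ?case by simp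
next
  case (Suc k)
  then obtain h t where x: "x = h # t" by (cases x) auto
  show ?case using Suc x by (cases h) auto
qed

lemma has_min_omega: "has_min (omega_pow k)"
  unfolding has_min_def omega_pow_def fst_conv snd_conv
  by (rule bexI[of _ "replicate k 0"]) (auto intro: lex_repl0)

lemma not_has_min_rev: "k \<ge> 1 \<Longrightarrow> \<not> has_min (rev_order (omega_pow k))"
proof
  assume k: "k \<ge> 1" and h: "has_min (rev_order (omega_pow k))"
  then obtain m where m: "length m = k" "\<forall>x. length x = k \<and> x \<noteq> m \<longrightarrow> lex_less x m"
    unfolding has_min_def rev_order_def omega_pow_def by auto
  then obtain a t where mt: "m = a # t" using k by (cases m) auto
  have "lex_less (Suc a # t) m" using m(2)[rule_format, of "Suc a # t"] m(1) mt by simp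
  then show False using mt by simp
qed

lemma omega_sq: "iso (sqg (omega_pow n)) (omega_pow (2 * n))"
proof -
  let ?f = "\<lambda>p. fst p @ snd p"
  let ?D = "{xs :: nat list. length xs = n}"
  have inj: "inj_on ?f (?D \<times> ?D)"
    by (auto simp: inj_on_def)
  have img: "?f ` (?D \<times> ?D) = {xs. length xs = 2 * n}"
  proof
    show "?f ` (?D \<times> ?D) \<subseteq> {xs. length xs = 2 * n}" by auto
    show "{xs. length xs = 2 * n} \<subseteq> ?f ` (?D \<times> ?D)"
    proof
      fix zs :: "nat list" assume "zs \<in> {xs. length xs = 2 * n}"
      then have "(take n zs, drop n zs) \<in> ?D \<times> ?D" "zs = ?f (take n zs, drop n zs)" by auto
      then show "zs \<in> ?f ` (?D \<times> ?D)" by blast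
    qed
  qed
  have "bij_betw ?f (?D \<times> ?D) {xs. length xs = 2 * n}" using inj img by (simp add: bij_betw_def)
  moreover have "\<forall>x\<in>?D \<times> ?D. \<forall>y\<in>?D \<times> ?D. lexR lex_less x y \<longleftrightarrow> lex_less (?f x) (?f y)"
    by (auto simp: lexR_def lex_app)
  ultimately show ?thesis unfolding sqg_def omega_pow_def iso_pair fst_conv snd_conv by blast
qed



lemma iso_sqn: "iso A B \<Longrightarrow> iso (sqn A) (sqn B)"
  by (meson iso_sqg iso_sqn_sqg iso_sym iso_trans)

lemma sqn_W: "iso A (omega_pow n) \<Longrightarrow> iso (sqn A) (omega_pow (2 * n))"
  by (meson iso_sqg iso_sqn_sqg iso_trans omega_sq)

lemma sqn_RW: "iso A (rev_order (omega_pow n)) \<Longrightarrow> iso (sqn A) (rev_order (omega_pow (2 * n)))"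
proof -
  assume h: "iso A (rev_order (omega_pow n))"
  have 1: "iso (sqn A) (sqg A)" by (rule iso_sqn_sqg)
  have "iso (sqg A) (sqg (rev_order (omega_pow n)))" using h by (rule iso_sqg)
  then have 2: "iso (sqg A) (rev_order (sqg (omega_pow n)))" by (simp add: sqg_rev)
  have 3: "iso (rev_order (sqg (omega_pow n))) (rev_order (omega_pow (2 * n)))"
    by (rule iso_rev[OF omega_sq])
  show ?thesis using iso_trans[OF 1 iso_trans[OF 2 3]] .
qed

lemma W_not_RW: "n \<ge> 1 \<Longrightarrow> \<not> iso (omega_pow (2 * n)) (rev_order (omega_pow (2 * n)))"
  using has_min_iso has_min_omega not_has_min_rev by fastforce

lemma slin_K0: "iso A (omega_pow n) \<or> iso A (rev_order (omega_pow n)) \<Longrightarrow> slin A"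
  using slin_iso slin_omega slin_rev by blast

theorem proposition6p1:
  fixes n :: nat
  assumes "n \<ge> 1"
  shows "leq_c (pair_class (omega_pow n) (rev_order (omega_pow n)))
               (pair_class (omega_pow (2 * n)) (rev_order (omega_pow (2 * n))))"
proof -
  let ?W = "omega_pow n" and ?W2 = "omega_pow (2 * n)"
  let ?K0 = "pair_class ?W (rev_order ?W)" and ?K1 = "pair_class ?W2 (rev_order ?W2)"
  have K0: "A \<in> ?K0 \<longleftrightarrow> iso A ?W \<or> iso A (rev_order ?W)" for A by (simp add: pair_class_def)
  have K1: "A \<in> ?K1 \<longleftrightarrow> iso A ?W2 \<or> iso A (rev_order ?W2)" for A by (simp add: pair_class_def)
  have GD: "enum_apply Gam (diag A) = diag (sqn A)" if "A \<in> ?K0" for A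
  proof -
    obtain D R where A: "A = (D, R)" by (cases A)
    have "slin (D, R)" using that slin_K0 K0 A by blast
    then show ?thesis unfolding A by (rule Gam_diag)
  qed
  have part2: "\<forall>A\<in>?K0. \<exists>B\<in>?K1. enum_apply Gam (diag A) = diag B"
  proof
    fix A assume a: "A \<in> ?K0"
    have "sqn A \<in> ?K1" using a K0 K1 sqn_W sqn_RW by blast
    then show "\<exists>B\<in>?K1. enum_apply Gam (diag A) = diag B" using GD[OF a] by blast
  qed
  have part3: "\<forall>A\<in>?K0. \<forall>B\<in>?K0. \<forall>A' B'. enum_apply Gam (diag A) = diag A' \<longrightarrow>
        enum_apply Gam (diag B) = diag B' \<longrightarrow> (iso A B \<longleftrightarrow> iso A' B')"
  proof (intro ballI allI impI)
    fix A B A' B'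
    assume a: "A \<in> ?K0" and b: "B \<in> ?K0"
      and ea: "enum_apply Gam (diag A) = diag A'" and eb: "enum_apply Gam (diag B) = diag B'"
    have ia: "iso A' (sqn A)" using ea GD[OF a] diag_eq_iso by metis
    have ib: "iso B' (sqn B)" using eb GD[OF b] diag_eq_iso by metis
    show "iso A B \<longleftrightarrow> iso A' B'"
    proof
      assume "iso A B"
      then have "iso (sqn A) (sqn B)" by (rule iso_sqn)
      then show "iso A' B'" using ia ib iso_trans iso_sym by metis
    next
      assume h: "iso A' B'"
      have s: "iso (sqn A) (sqn B)" using ia ib h iso_trans iso_sym by metis
      show "iso A B"
      proof (cases "iso A ?W")
        case aW: True
        show ?thesis
        proof (cases "iso B ?W")
          case True then show ?thesis using aW iso_trans iso_sym by metis
        next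
          case False
          then have "iso B (rev_order ?W)" using b K0 by blast
          then have "iso (sqn B) (rev_order ?W2)" by (rule sqn_RW)
          moreover have "iso (sqn A) ?W2" using aW by (rule sqn_W)
          ultimately have "iso ?W2 (rev_order ?W2)" using s iso_trans iso_sym by metis
          then show ?thesis using W_not_RW assms by blast
        qed
      next
        case aR: False
        then have aR': "iso A (rev_order ?W)" using a K0 by blast
        show ?thesis
        proof (cases "iso B ?W")
          case True
          then have "iso (sqn B) ?W2" by (rule sqn_W)
          moreover have "iso (sqn A) (rev_order ?W2)" using aR' by (rule sqn_RW)
          ultimately have "iso ?W2 (rev_order ?W2)" using s iso_trans iso_sym by metis
          then show ?thesis using W_not_RW assms by blast
        next
          case False
          then have "iso B (rev_order ?W)" using b K0 by blast
          then show ?thesis using aR' iso_trans iso_sym by metis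
        qed
      qed
    qed
  qed
  show ?thesis unfolding leq_c_def comp_embedding_def
    using enum_Gam part2 part3 by blast
qed

end
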